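(* Let $\mathcal G$ be a synchronous game. The assignment $p^i_a\mapsto\frac12(1-z^i_a)$ extends to a unital $*$-isomorphism from the synchronous algebra $\mathcal A(\mathcal G)$ onto the SynchBCS algebra $\mathscr B(\mathcal G)$, whose inverse is determined by $z^i_a\mapsto 1-2p^i_a$.
   Context: A synchronous game has finite input set $I$ (for both players), output set $A$ (for both players) and predicate $V:A\times A\times I\times I\to\{0,1\}$ with $V(a,b|i,i)=0$ whenever $a\neq b$. The synchronous algebra $\mathcal A(\mathcal G)$ is the universal unital complex $*$-algebra with generators $p^i_a$, $(i,a)\in I\times A$, and relations $(p^i_a)^2=p^i_a=(p^i_a)^*$; $\sum_{a\in A}p^i_a=1$ for each $i$; $p^i_ap^j_b=0$ whenever $V(a,b|i,j)=0$. The SynchBCS algebra $\mathscr B(\mathcal G)$ is the universal unital complex $*$-algebra with generators $z^i_a$, $(i,a)\in I\times A$, and relations: $z^i_a=(z^i_a)^*$; $(z^i_a)^2=1$; $\frac12(1+z^i_a+z^j_b-z^i_az^j_b)=1$ whenever $V(a,b|i,j)=0$; $\prod_{a\in A}z^i_a=-1$ for each $i$ (product in a fixed order of $A$); $z^i_az^i_{a'}=z^i_{a'}z^i_a$ for all $a,a'\in A$. *)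

theory Defs
  imports Complex_Main "HOL-Library.Function_Algebras"
begin

text \<open>Free unital complex *-algebra on a set of generators 'x, realised concretely as
finitely supported complex-valued functions on words over the letters
Inl x (the generator x) and Inr x (its adjoint x*).  Addition, subtraction and zero are
pointwise (Function_Algebras); multiplication is concatenation-convolution.\<close>

type_synonym 'x fsa = "('x + 'x) list \<Rightarrow> complex"

definition ncpoly :: "'x fsa set" where
  "ncpoly = {f. finite {w. f w \<noteq> 0}}"

definition fone :: "'x fsa" where
  "fone = (\<lambda>w. if w = [] then 1 else 0)"

definition gen :: "'x \<Rightarrow> 'x fsa" where
  "gen x = (\<lambda>w. if w = [Inl x] then 1 else 0)"

definition fscale :: "complex \<Rightarrow> 'x fsa \<Rightarrow> 'x fsa" where
  "fscale c f = (\<lambda>w. c * f w)"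

definition fmul :: "'x fsa \<Rightarrow> 'x fsa \<Rightarrow> 'x fsa" where
  "fmul f g = (\<lambda>w. \<Sum>k\<le>length w. f (take k w) * g (drop k w))"

fun flip :: "'x + 'x \<Rightarrow> 'x + 'x" where
  "flip (Inl x) = Inr x"
| "flip (Inr x) = Inl x"

definition fstar :: "'x fsa \<Rightarrow> 'x fsa" where
  "fstar f = (\<lambda>w. cnj (f (rev (map flip w))))"

fun letter_img :: "('x \<Rightarrow> 'y fsa) \<Rightarrow> 'x + 'x \<Rightarrow> 'y fsa" where
  "letter_img h (Inl x) = h x"
| "letter_img h (Inr x) = fstar (h x)"

definition word_img :: "('x \<Rightarrow> 'y fsa) \<Rightarrow> ('x + 'x) list \<Rightarrow> 'y fsa" where
  "word_img h w = foldr (\<lambda>l acc. fmul (letter_img h l) acc) w fone"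

definition subst :: "('x \<Rightarrow> 'y fsa) \<Rightarrow> 'x fsa \<Rightarrow> 'y fsa" where
  "subst h f = (\<Sum>w\<in>{w. f w \<noteq> 0}. fscale (f w) (word_img h w))"

inductive_set star_ideal :: "'x fsa set \<Rightarrow> 'x fsa set" for R where
  rel: "r \<in> R \<Longrightarrow> r \<in> star_ideal R"
| zero: "0 \<in> star_ideal R"
| add: "a \<in> star_ideal R \<Longrightarrow> b \<in> star_ideal R \<Longrightarrow> a + b \<in> star_ideal R"
| smult: "a \<in> star_ideal R \<Longrightarrow> fscale c a \<in> star_ideal R"
| lmul: "a \<in> star_ideal R \<Longrightarrow> x \<in> ncpoly \<Longrightarrow> fmul x a \<in> star_ideal R"
| rmul: "a \<in> star_ideal R \<Longrightarrow> x \<in> ncpoly \<Longrightarrow> fmul a x \<in> star_ideal R"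
| star: "a \<in> star_ideal R \<Longrightarrow> fstar a \<in> star_ideal R"

text \<open>Relators (lhs - rhs) of the synchronous algebra; generator (i,a) is p^i_a.
  V a b i j = True means V(a,b|i,j) = 1.\<close>

definition sync_rels :: "('a \<Rightarrow> 'a \<Rightarrow> 'i \<Rightarrow> 'i \<Rightarrow> bool) \<Rightarrow> ('i \<times> 'a::finite) fsa set" where
  "sync_rels V =
     {fmul (gen (i,a)) (gen (i,a)) - gen (i,a) | i a. True}
   \<union> {gen (i,a) - fstar (gen (i,a)) | i a. True}
   \<union> {(\<Sum>a\<in>UNIV. gen (i,a)) - fone | i. True}
   \<union> {fmul (gen (i,a)) (gen (j,b)) | i j a b. \<not> V a b i j}"

text \<open>Relators of the SynchBCS algebra; generator (i,a) is z^i_a.  The product over A is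
  taken in the fixed (increasing) order of the linear order on A.\<close>

definition bcs_rels :: "('a \<Rightarrow> 'a \<Rightarrow> 'i \<Rightarrow> 'i \<Rightarrow> bool) \<Rightarrow> ('i \<times> 'a::{finite,linorder}) fsa set" where
  "bcs_rels V =
     {gen (i,a) - fstar (gen (i,a)) | i a. True}
   \<union> {fmul (gen (i,a)) (gen (i,a)) - fone | i a. True}
   \<union> {fscale (1/2) (fone + gen (i,a) + gen (j,b) - fmul (gen (i,a)) (gen (j,b))) - fone
        | i j a b. \<not> V a b i j}
   \<union> {foldr fmul (map (\<lambda>a. gen (i,a)) (sorted_list_of_set (UNIV :: 'a set))) fone + fone | i. True}
   \<union> {fmul (gen (i,a)) (gen (i,a')) - fmul (gen (i,a')) (gen (i,a)) | i a a'. True}"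

text \<open>The assignments h (on generators of the first algebra) and k (on generators of the
  second) extend to mutually inverse unital *-isomorphisms F/J1 \<rightarrow> F/J2 and back.\<close>

definition induces_star_iso :: "'x fsa set \<Rightarrow> 'y fsa set \<Rightarrow> ('x \<Rightarrow> 'y fsa) \<Rightarrow> ('y \<Rightarrow> 'x fsa) \<Rightarrow> bool" where
  "induces_star_iso J1 J2 h k \<longleftrightarrow>
     (\<forall>f\<in>J1. subst h f \<in> J2) \<and> (\<forall>g\<in>J2. subst k g \<in> J1) \<and>
     (\<forall>f\<in>ncpoly. subst k (subst h f) - f \<in> J1) \<and>
     (\<forall>g\<in>ncpoly. subst h (subst k g) - g \<in> J2)"

end

theory Submission
  imports Defs
begin


lemma sum_fun_apply: "(\<Sum>i\<in>S. F i) w = (\<Sum>i\<in>S. (F i) w)"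
  for F :: "'b \<Rightarrow> 'x fsa"
  by (induction S rule: infinite_finite_induct) auto

definition delta :: "('x+'x) list \<Rightarrow> 'x fsa" where
  "delta u = (\<lambda>v. if v = u then 1 else 0)"

lemma fscale_apply[simp]: "fscale c f w = c * f w" by (simp add: fscale_def)

lemma decomp:
  assumes "finite S" "{w. f w \<noteq> 0} \<subseteq> S"
  shows "f = (\<Sum>w\<in>S. fscale (f w) (delta w))"
proof (rule ext)
  fix v
  have "(\<Sum>w\<in>S. fscale (f w) (delta w)) v = (\<Sum>w\<in>S. if v = w then f v else 0)"
    unfolding sum_fun_apply by (rule sum.cong) (auto simp: delta_def)
  also have "\<dots> = f v" using assms by (auto simp: sum.delta)
  finally show "f v = (\<Sum>w\<in>S. fscale (f w) (delta w)) v" by simp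
qed

lemma decomp': "f \<in> ncpoly \<Longrightarrow> f = (\<Sum>w\<in>{w. f w \<noteq> 0}. fscale (f w) (delta w))"
  by (rule decomp) (auto simp: ncpoly_def)

lemma fmul_add_left: "fmul (f + g) h = fmul f h + fmul g h"
  by (rule ext) (simp add: fmul_def distrib_right sum.distrib)
lemma fmul_add_right: "fmul h (f + g) = fmul h f + fmul h g"
  by (rule ext) (simp add: fmul_def distrib_left sum.distrib)
lemma fmul_diff_left: "fmul (f - g) h = fmul f h - fmul g h"
  by (rule ext) (simp add: fmul_def left_diff_distrib sum_subtractf)
lemma fmul_diff_right: "fmul h (f - g) = fmul h f - fmul h g"
  by (rule ext) (simp add: fmul_def right_diff_distrib sum_subtractf)
lemma fmul_scale_left: "fmul (fscale c f) h = fscale c (fmul f h)"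
  by (rule ext) (simp add: fmul_def sum_distrib_left mult.assoc)
lemma fmul_scale_right: "fmul h (fscale c f) = fscale c (fmul h f)"
  by (rule ext) (simp add: fmul_def sum_distrib_left mult.left_commute)
lemma fmul_zero_left: "fmul 0 h = 0"
  by (rule ext) (simp add: fmul_def)
lemma fmul_zero_right: "fmul h 0 = 0"
  by (rule ext) (simp add: fmul_def)
lemma fmul_sum_left: "fmul (\<Sum>i\<in>S. F i) h = (\<Sum>i\<in>S. fmul (F i) h)"
  by (rule ext) (simp add: fmul_def sum_fun_apply sum_distrib_right sum.swap[where A=S])
lemma fmul_sum_right: "fmul h (\<Sum>i\<in>S. F i) = (\<Sum>i\<in>S. fmul h (F i))"
  by (rule ext) (simp add: fmul_def sum_fun_apply sum_distrib_left sum.swap[where A=S])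

lemma fone_delta: "fone = delta []" by (simp add: fone_def delta_def fun_eq_iff)

lemma fmul_delta: "fmul (delta u) (delta v) = delta (u @ v)"
proof (rule ext)
  fix w :: "('a+'a) list"
  have "fmul (delta u) (delta v) w = (\<Sum>k\<le>length w. if k = length u \<and> w = u @ v then 1 else 0)"
    unfolding fmul_def delta_def
  proof (rule sum.cong)
    fix k assume "k \<in> {..length w}"
    then have "(take k w = u \<and> drop k w = v) = (k = length u \<and> w = u @ v)"
      by (metis append_take_drop_id append_eq_conv_conj length_take min_absorb2 atMost_iff)
    then show "(if take k w = u then 1 else 0) * (if drop k w = v then 1 else 0) =
      (if k = length u \<and> w = u @ v then 1 else (0::complex))" by auto
  qed simp
  also have "\<dots> = delta (u @ v) w"
    by (auto simp: delta_def)
  finally show "fmul (delta u) (delta v) w = delta (u @ v) w" .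
qed

lemma fmul_fone_left: "fmul fone g = g"
proof (rule ext)
  fix w :: "('a+'a) list"
  have "fmul fone g w = (\<Sum>k\<le>length w. if k = 0 then g w else 0)"
    unfolding fmul_def fone_def by (rule sum.cong) auto
  then show "fmul fone g w = g w" by (simp add: sum.delta)
qed

lemma fmul_fone_right: "fmul g fone = g"
proof (rule ext)
  fix w :: "('a+'a) list"
  have "fmul g fone w = (\<Sum>k\<le>length w. if k = length w then g w else 0)"
    unfolding fmul_def fone_def by (rule sum.cong) auto
  then show "fmul g fone w = g w" by (simp add: sum.delta)
qed

definition rf :: "('x+'x) list \<Rightarrow> ('x+'x) list" where "rf w = rev (map flip w)"
lemma flip_flip[simp]: "flip (flip l) = l" by (cases l) auto
lemma rf_rf[simp]: "rf (rf w) = w" by (simp add: rf_def rev_map comp_def)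
lemma rf_append: "rf (u @ v) = rf v @ rf u" by (simp add: rf_def)
lemma rf_eq_iff: "(rf w = u) = (w = rf u)" by (metis rf_rf)

lemma fscale_fscale: "fscale c (fscale d f) = fscale (c * d) f"
  by (rule ext) simp
lemma fscale_sum: "fscale c (\<Sum>i\<in>S. F i) = (\<Sum>i\<in>S. fscale c (F i))"
  by (rule ext) (simp add: sum_fun_apply sum_distrib_left)

lemma ncpoly_zero[simp]: "0 \<in> ncpoly" by (simp add: ncpoly_def)
lemma ncpoly_add[simp]: "f \<in> ncpoly \<Longrightarrow> g \<in> ncpoly \<Longrightarrow> f + g \<in> ncpoly"
  unfolding ncpoly_def by (rule CollectI, rule finite_subset[of _ "{w. f w \<noteq> 0} \<union> {w. g w \<noteq> 0}"]) auto
lemma ncpoly_diff[simp]: "f \<in> ncpoly \<Longrightarrow> g \<in> ncpoly \<Longrightarrow> f - g \<in> ncpoly"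
  unfolding ncpoly_def by (rule CollectI, rule finite_subset[of _ "{w. f w \<noteq> 0} \<union> {w. g w \<noteq> 0}"]) auto
lemma ncpoly_scale[simp]: "f \<in> ncpoly \<Longrightarrow> fscale c f \<in> ncpoly"
  unfolding ncpoly_def by (rule CollectI, rule finite_subset[of _ "{w. f w \<noteq> 0}"]) auto
lemma ncpoly_sum[simp]: "(\<And>i. i \<in> S \<Longrightarrow> F i \<in> ncpoly) \<Longrightarrow> (\<Sum>i\<in>S. F i) \<in> ncpoly"
  by (induction S rule: infinite_finite_induct) auto
lemma ncpoly_delta[simp]: "delta u \<in> ncpoly"
  unfolding ncpoly_def by (rule CollectI, rule finite_subset[of _ "{u}"]) (auto simp: delta_def)
lemma gen_delta: "gen x = delta [Inl x]" by (simp add: gen_def delta_def)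
lemma ncpoly_fone[simp]: "fone \<in> ncpoly" by (simp add: fone_delta)
lemma ncpoly_gen[simp]: "gen x \<in> ncpoly" by (simp add: gen_delta)

lemma supp_fin: "f \<in> ncpoly \<Longrightarrow> finite {w. f w \<noteq> 0}" by (simp add: ncpoly_def)

lemma fmul_expand:
  assumes f: "f \<in> ncpoly" and g: "g \<in> ncpoly"
  shows "fmul f g = (\<Sum>u\<in>{w. f w \<noteq> 0}. \<Sum>v\<in>{w. g w \<noteq> 0}. fscale (f u * g v) (delta (u @ v)))"
proof -
  have "fmul f g = fmul (\<Sum>u\<in>{w. f w \<noteq> 0}. fscale (f u) (delta u)) (\<Sum>v\<in>{w. g w \<noteq> 0}. fscale (g v) (delta v))"
    using decomp'[OF f] decomp'[OF g] by (rule arg_cong2)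
  also have "\<dots> = (\<Sum>u\<in>{w. f w \<noteq> 0}. \<Sum>v\<in>{w. g w \<noteq> 0}. fscale (f u * g v) (delta (u @ v)))"
    unfolding fmul_sum_left by (simp add: fmul_sum_right fmul_scale_left fmul_scale_right fmul_delta fscale_fscale fscale_sum ac_simps)
  finally show ?thesis .
qed

lemma ncpoly_fmul[simp]: "f \<in> ncpoly \<Longrightarrow> g \<in> ncpoly \<Longrightarrow> fmul f g \<in> ncpoly"
  by (simp add: fmul_expand)

lemma fmul_assoc:
  assumes f: "f \<in> ncpoly" and g: "g \<in> ncpoly" and h: "h \<in> ncpoly"
  shows "fmul (fmul f g) h = fmul f (fmul g h)"
proof -
  have "fmul (fmul f g) h = fmul (\<Sum>u\<in>{w. f w \<noteq> 0}. \<Sum>v\<in>{w. g w \<noteq> 0}. fscale (f u * g v) (delta (u @ v)))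
     (\<Sum>y\<in>{w. h w \<noteq> 0}. fscale (h y) (delta y))"
    using fmul_expand[OF f g] decomp'[OF h] by (rule arg_cong2)
  also have "\<dots> = (\<Sum>u\<in>{w. f w \<noteq> 0}. \<Sum>v\<in>{w. g w \<noteq> 0}. \<Sum>y\<in>{w. h w \<noteq> 0}. fscale (f u * g v * h y) (delta (u @ v @ y)))"
    unfolding fmul_sum_left by (simp add: fmul_sum_right fmul_scale_left fmul_scale_right fmul_delta fscale_fscale fscale_sum ac_simps)
  also have "\<dots> = fmul (\<Sum>u\<in>{w. f w \<noteq> 0}. fscale (f u) (delta u)) (\<Sum>v\<in>{w. g w \<noteq> 0}. \<Sum>y\<in>{w. h w \<noteq> 0}. fscale (g v * h y) (delta (v @ y)))"
    unfolding fmul_sum_left by (simp add: fmul_sum_right fmul_scale_left fmul_scale_right fmul_delta fscale_fscale fscale_sum ac_simps)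
  also have "\<dots> = fmul f (fmul g h)"
    using decomp'[OF f, symmetric] fmul_expand[OF g h, symmetric] by (rule arg_cong2)
  finally show ?thesis .
qed

lemma fstar_apply: "fstar f w = cnj (f (rf w))" by (simp add: fstar_def rf_def)
lemma fstar_add: "fstar (f + g) = fstar f + fstar g" by (rule ext) (simp add: fstar_apply)
lemma fstar_diff: "fstar (f - g) = fstar f - fstar g" by (rule ext) (simp add: fstar_apply)
lemma fstar_zero: "fstar 0 = 0" by (rule ext) (simp add: fstar_apply)
lemma fstar_scale: "fstar (fscale c f) = fscale (cnj c) (fstar f)" by (rule ext) (simp add: fstar_apply)
lemma fstar_sum: "fstar (\<Sum>i\<in>S. F i) = (\<Sum>i\<in>S. fstar (F i))"
  by (rule ext) (simp add: fstar_apply sum_fun_apply)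
lemma fstar_delta: "fstar (delta u) = delta (rf u)"
  by (rule ext) (simp add: fstar_apply delta_def rf_eq_iff)
lemma fstar_fone: "fstar fone = fone" by (simp add: fone_delta fstar_delta rf_def)
lemma fstar_fstar: "fstar (fstar f) = f" by (rule ext) (simp add: fstar_apply)
lemma ncpoly_fstar[simp]: "f \<in> ncpoly \<Longrightarrow> fstar f \<in> ncpoly"
  unfolding ncpoly_def by (rule CollectI, rule finite_subset[of _ "rf ` {w. f w \<noteq> 0}"])
    (auto simp: fstar_apply intro!: image_eqI[where x="rf _"])

lemma fstar_fmul:
  assumes f: "f \<in> ncpoly" and g: "g \<in> ncpoly"
  shows "fstar (fmul f g) = fmul (fstar g) (fstar f)"
proof -
  have "fstar (fmul f g) = (\<Sum>u\<in>{w. f w \<noteq> 0}. \<Sum>v\<in>{w. g w \<noteq> 0}. fscale (cnj (g v) * cnj (f u)) (delta (rf v @ rf u)))"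
    by (simp add: fmul_expand[OF f g] fstar_sum fstar_scale fstar_delta rf_append mult.commute)
  also have "\<dots> = (\<Sum>v\<in>{w. g w \<noteq> 0}. \<Sum>u\<in>{w. f w \<noteq> 0}. fscale (cnj (g v) * cnj (f u)) (delta (rf v @ rf u)))"
    by (rule sum.swap)
  also have "\<dots> = fmul (fstar (\<Sum>v\<in>{w. g w \<noteq> 0}. fscale (g v) (delta v))) (fstar (\<Sum>u\<in>{w. f w \<noteq> 0}. fscale (f u) (delta u)))"
    unfolding fstar_sum fmul_sum_left by (simp add: fstar_scale fstar_delta fmul_sum_right fmul_scale_left fmul_scale_right fmul_delta fscale_fscale fscale_sum ac_simps)
  also have "\<dots> = fmul (fstar g) (fstar f)"
    using decomp'[OF f] decomp'[OF g] by simp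
  finally show ?thesis .
qed


lemma fscale_one[simp]: "fscale 1 f = f" by (rule ext) simp
lemma fscale_zero[simp]: "fscale 0 f = 0" by (rule ext) simp
lemma fscale_zero2[simp]: "fscale c 0 = 0" by (rule ext) simp
lemma fscale_add_left: "fscale (a + b) f = fscale a f + fscale b f" by (rule ext) (simp add: distrib_right)
lemma fscale_diff_left: "fscale (a - b) f = fscale a f - fscale b f" by (rule ext) (simp add: left_diff_distrib)

lemma word_img_Nil[simp]: "word_img h [] = fone" by (simp add: word_img_def)
lemma word_img_Cons[simp]: "word_img h (l # w) = fmul (letter_img h l) (word_img h w)" by (simp add: word_img_def)

context
  fixes h :: "'x \<Rightarrow> 'y fsa"
  assumes H: "\<And>x. h x \<in> ncpoly"
begin

lemma letter_nc[simp]: "letter_img h l \<in> ncpoly" by (cases l) (auto simp: H)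
lemma word_nc[simp]: "word_img h w \<in> ncpoly" by (induction w) auto

lemma word_img_append: "word_img h (u @ v) = fmul (word_img h u) (word_img h v)"
  by (induction u) (auto simp: fmul_fone_left fmul_assoc)

lemma letter_img_flip: "letter_img h (flip l) = fstar (letter_img h l)"
  by (cases l) (auto simp: fstar_fstar)

lemma word_img_rf: "word_img h (rf u) = fstar (word_img h u)"
proof (induction u)
  case Nil then show ?case by (simp add: rf_def fstar_fone)
next
  case (Cons l u)
  have "rf (l # u) = rf u @ [flip l]" by (simp add: rf_def)
  then show ?case using Cons
    by (simp add: word_img_append fmul_fone_right letter_img_flip fstar_fmul)
qed

lemma subst_supp:
  assumes "finite S" "{w. f w \<noteq> 0} \<subseteq> S"
  shows "subst h f = (\<Sum>w\<in>S. fscale (f w) (word_img h w))"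
  unfolding subst_def by (rule sum.mono_neutral_left) (use assms in auto)

lemma subst_add:
  assumes f: "f \<in> ncpoly" and g: "g \<in> ncpoly"
  shows "subst h (f + g) = subst h f + subst h g"
proof -
  let ?S = "{w. f w \<noteq> 0} \<union> {w. g w \<noteq> 0}"
  have fin: "finite ?S" using supp_fin[OF f] supp_fin[OF g] by auto
  have "subst h (f + g) = (\<Sum>w\<in>?S. fscale ((f + g) w) (word_img h w))"
    by (rule subst_supp[OF fin]) auto
  also have "\<dots> = (\<Sum>w\<in>?S. fscale (f w) (word_img h w)) + (\<Sum>w\<in>?S. fscale (g w) (word_img h w))"
    by (simp add: fscale_add_left sum.distrib)
  also have "\<dots> = subst h f + subst h g"
    by (simp add: subst_supp[OF fin])
  finally show ?thesis .
qed

lemma subst_diff: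
  assumes f: "f \<in> ncpoly" and g: "g \<in> ncpoly"
  shows "subst h (f - g) = subst h f - subst h g"
proof -
  let ?S = "{w. f w \<noteq> 0} \<union> {w. g w \<noteq> 0}"
  have fin: "finite ?S" using supp_fin[OF f] supp_fin[OF g] by auto
  have "subst h (f - g) = (\<Sum>w\<in>?S. fscale ((f - g) w) (word_img h w))"
    by (rule subst_supp[OF fin]) auto
  also have "\<dots> = (\<Sum>w\<in>?S. fscale (f w) (word_img h w)) - (\<Sum>w\<in>?S. fscale (g w) (word_img h w))"
    by (simp add: fscale_diff_left sum_subtractf)
  also have "\<dots> = subst h f - subst h g"
    by (simp add: subst_supp[OF fin])
  finally show ?thesis .
qed

lemma subst_scale: "f \<in> ncpoly \<Longrightarrow> subst h (fscale c f) = fscale c (subst h f)"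
  using subst_supp[of "{w. f w \<noteq> 0}" f]
    subst_supp[of "{w. f w \<noteq> 0}" "fscale c f"]
  by (auto simp: supp_fin fscale_sum fscale_fscale)

lemma subst_zero[simp]: "subst h 0 = 0" by (simp add: subst_def)

lemma subst_sum: "(\<And>i. i \<in> I \<Longrightarrow> F i \<in> ncpoly) \<Longrightarrow> subst h (\<Sum>i\<in>I. F i) = (\<Sum>i\<in>I. subst h (F i))"
  by (induction I rule: infinite_finite_induct) (auto simp: subst_add)

lemma subst_delta: "subst h (delta w) = word_img h w"
  using subst_supp[of "{w}" "delta w"] by (simp add: delta_def)

lemma subst_nc[simp]: "subst h f \<in> ncpoly"
  unfolding subst_def by simp

lemma subst_fone: "subst h fone = fone" by (simp add: fone_delta subst_delta)
lemma subst_gen: "subst h (gen x) = h x" by (simp add: gen_delta subst_delta fmul_fone_right)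

lemma subst_eq: "f \<in> ncpoly \<Longrightarrow> subst h f = (\<Sum>w\<in>{w. f w \<noteq> 0}. fscale (f w) (word_img h w))"
  by (rule subst_supp) (auto simp: supp_fin)

lemma subst_fmul:
  assumes f: "f \<in> ncpoly" and g: "g \<in> ncpoly"
  shows "subst h (fmul f g) = fmul (subst h f) (subst h g)"
proof -
  have "subst h (fmul f g) = (\<Sum>u\<in>{w. f w \<noteq> 0}. \<Sum>v\<in>{w. g w \<noteq> 0}. fscale (f u * g v) (word_img h (u @ v)))"
    by (simp add: fmul_expand[OF f g] subst_sum subst_scale subst_delta)
  also have "\<dots> = fmul (subst h f) (subst h g)"
    unfolding subst_eq[OF f] subst_eq[OF g] fmul_sum_left
    by (simp add: fmul_sum_right fmul_scale_left fmul_scale_right word_img_append fscale_fscale fscale_sum ac_simps)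
  finally show ?thesis .
qed

lemma subst_fstar:
  assumes f: "f \<in> ncpoly"
  shows "subst h (fstar f) = fstar (subst h f)"
proof -
  have "fstar f = (\<Sum>u\<in>{w. f w \<noteq> 0}. fscale (cnj (f u)) (delta (rf u)))"
    by (subst decomp'[OF f]) (simp add: fstar_sum fstar_scale fstar_delta)
  then have "subst h (fstar f) = (\<Sum>u\<in>{w. f w \<noteq> 0}. fscale (cnj (f u)) (word_img h (rf u)))"
    by (simp add: subst_sum subst_scale subst_delta)
  then show ?thesis
    by (simp add: subst_eq[OF f] fstar_sum fstar_scale word_img_rf)
qed

end

lemma subst_word_img:
  assumes H: "\<And>x. h x \<in> ncpoly" and K: "\<And>x. k x \<in> ncpoly"
  shows "subst k (word_img h w) = word_img (\<lambda>x. subst k (h x)) w"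
proof (induction w)
  case Nil then show ?case by (simp add: subst_fone K)
next
  case (Cons l w)
  have "subst k (letter_img h l) = letter_img (\<lambda>x. subst k (h x)) l"
    by (cases l) (auto simp: subst_fstar K H)
  then show ?case using Cons by (simp add: subst_fmul K H)
qed

lemma subst_subst:
  assumes H: "\<And>x. h x \<in> ncpoly" and K: "\<And>x. k x \<in> ncpoly" and f: "f \<in> ncpoly"
  shows "subst k (subst h f) = subst (\<lambda>x. subst k (h x)) f"
proof -
  have KH: "\<And>x. subst k (h x) \<in> ncpoly" using K by simp
  have "subst k (subst h f) = subst k (\<Sum>w\<in>{w. f w \<noteq> 0}. fscale (f w) (word_img h w))"
    by (simp only: subst_eq[OF H f])
  also have "\<dots> = (\<Sum>w\<in>{w. f w \<noteq> 0}. fscale (f w) (subst k (word_img h w)))"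
    by (simp add: subst_sum[OF K] subst_scale[OF K] H)
  also have "\<dots> = (\<Sum>w\<in>{w. f w \<noteq> 0}. fscale (f w) (word_img (\<lambda>x. subst k (h x)) w))"
    by (simp add: subst_word_img[OF H K])
  also have "\<dots> = subst (\<lambda>x. subst k (h x)) f"
    by (rule subst_eq[OF KH f, symmetric])
  finally show ?thesis .
qed

lemma word_img_gen: "word_img gen w = delta w"
proof (induction w)
  case Nil then show ?case by (simp add: fone_delta)
next
  case (Cons l w)
  have "letter_img gen l = delta [l]"
    by (cases l) (auto simp: gen_delta fstar_delta rf_def)
  then show ?case using Cons by (simp add: fmul_delta)
qed

lemma subst_gen_id: "f \<in> ncpoly \<Longrightarrow> subst gen f = f"
  by (simp add: subst_eq word_img_gen decomp'[symmetric])


declare fscale_apply[simp del]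

lemma ideal_induct[consumes 1, case_names rel zero add smult lmul rmul star]:
  assumes x: "x \<in> star_ideal R"
    and rel: "\<And>r. r \<in> R \<Longrightarrow> P r"
    and zero: "P 0"
    and add: "\<And>a b. a \<in> star_ideal R \<Longrightarrow> P a \<Longrightarrow> b \<in> star_ideal R \<Longrightarrow> P b \<Longrightarrow> P (a + b)"
    and smult: "\<And>a c. a \<in> star_ideal R \<Longrightarrow> P a \<Longrightarrow> P (fscale c a)"
    and lmul: "\<And>a y. a \<in> star_ideal R \<Longrightarrow> P a \<Longrightarrow> y \<in> ncpoly \<Longrightarrow> P (fmul y a)"
    and rmul: "\<And>a y. a \<in> star_ideal R \<Longrightarrow> P a \<Longrightarrow> y \<in> ncpoly \<Longrightarrow> P (fmul a y)"
    and star: "\<And>a. a \<in> star_ideal R \<Longrightarrow> P a \<Longrightarrow> P (fstar a)"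
  shows "P x"
  using x
  apply (rule star_ideal.induct)
  apply (rule rel, assumption)
  apply (rule zero)
  apply (rule add; assumption)
  apply (rule smult; assumption)
  apply (rule lmul; assumption)
  apply (rule rmul; assumption)
  apply (rule star; assumption)
  done

lemma ideal_nc: assumes R: "R \<subseteq> ncpoly" shows "a \<in> star_ideal R \<Longrightarrow> a \<in> ncpoly"
  apply (induction rule: ideal_induct)
  apply (rule R[THEN subsetD], assumption)
  apply (rule ncpoly_zero)
  apply (rule ncpoly_add; assumption)
  apply (rule ncpoly_scale; assumption)
  apply (rule ncpoly_fmul; assumption)
  apply (rule ncpoly_fmul; assumption)
  apply (rule ncpoly_fstar; assumption)
  done

lemma ideal_diff: "a \<in> star_ideal R \<Longrightarrow> b \<in> star_ideal R \<Longrightarrow> a - b \<in> star_ideal R"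
proof -
  assume a: "a \<in> star_ideal R" and b: "b \<in> star_ideal R"
  have e: "a - b = a + fscale (-1) b" by (rule ext) (simp add: fscale_apply)
  show ?thesis unfolding e by (intro star_ideal.add star_ideal.smult a b)
qed

lemma ideal_sum: "(\<And>i. i \<in> S \<Longrightarrow> F i \<in> star_ideal R) \<Longrightarrow> (\<Sum>i\<in>S. F i) \<in> star_ideal R"
proof (induction S rule: infinite_finite_induct)
  case (infinite A) show ?case unfolding sum.infinite[OF infinite.hyps] by (rule star_ideal.zero)
next
  case empty show ?case unfolding sum.empty by (rule star_ideal.zero)
next
  case (insert x A)
  show ?case unfolding sum.insert[OF insert.hyps]
    by (rule star_ideal.add) (use insert in auto)
qed

lemma subst_ideal:
  assumes H: "\<And>x. h x \<in> ncpoly" and R: "R \<subseteq> ncpoly"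
    and rels: "\<And>r. r \<in> R \<Longrightarrow> subst h r \<in> star_ideal R'"
  shows "a \<in> star_ideal R \<Longrightarrow> subst h a \<in> star_ideal R'"
proof (induction rule: ideal_induct)
  case (rel r) then show ?case by (rule rels)
next
  case zero then show ?case by (simp only: subst_zero[OF H] star_ideal.zero)
next
  case (add a b)
  have "subst h (a + b) = subst h a + subst h b"
    by (rule subst_add[OF H]) (rule ideal_nc[OF R], fact)+
  then show ?case using add.IH by (simp only: star_ideal.add)
next
  case (smult a c)
  have "subst h (fscale c a) = fscale c (subst h a)"
    by (rule subst_scale[OF H]) (rule ideal_nc[OF R], fact)
  then show ?case using smult.IH by (simp only: star_ideal.smult)
next
  case (lmul a x)
  have "subst h (fmul x a) = fmul (subst h x) (subst h a)"
    by (rule subst_fmul[OF H]) (fact, rule ideal_nc[OF R], fact)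
  then show ?case using lmul.IH by (simp only: star_ideal.lmul subst_nc[OF H])
next
  case (rmul a x)
  have "subst h (fmul a x) = fmul (subst h a) (subst h x)"
    by (rule subst_fmul[OF H]) (rule ideal_nc[OF R], fact, fact)
  then show ?case using rmul.IH by (simp only: star_ideal.rmul subst_nc[OF H])
next
  case (star a)
  have "subst h (fstar a) = fstar (subst h a)"
    by (rule subst_fstar[OF H]) (rule ideal_nc[OF R], fact)
  then show ?case using star.IH by (simp only: star_ideal.star)
qed

lemma prod_lemma:
  assumes R: "R \<subseteq> ncpoly" and q: "\<And>a. q a \<in> ncpoly"
    and orth: "\<And>a b. a \<noteq> b \<Longrightarrow> fmul (q a) (q b) \<in> star_ideal R"
  shows "distinct L \<Longrightarrow> foldr fmul (map (\<lambda>a. fone - fscale 2 (q a)) L) fone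
            - (fone - fscale 2 (\<Sum>a\<in>set L. q a)) \<in> star_ideal R"
proof (induction L)
  case Nil
  have "foldr fmul (map (\<lambda>a. fone - fscale 2 (q a)) []) fone - (fone - fscale 2 (\<Sum>a\<in>set []. q a)) = 0"
    by simp
  then show ?case by (simp only: star_ideal.zero)
next
  case (Cons a L)
  let ?X = "foldr fmul (map (\<lambda>a. fone - fscale 2 (q a)) L) fone"
  let ?S = "\<Sum>a\<in>set L. q a"
  let ?P = "fone - fscale 2 (q a)"
  have d: "distinct L" and aL: "a \<notin> set L" using Cons.prems by auto
  note IH = Cons.IH[OF d]
  have eq: "foldr fmul (map (\<lambda>a. fone - fscale 2 (q a)) (a # L)) fone - (fone - fscale 2 (\<Sum>a\<in>set (a # L). q a))
    = fmul ?P (?X - (fone - fscale 2 ?S)) + fscale 4 (fmul (q a) ?S)"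
    using aL by (intro ext) (simp add: fmul_diff_left fmul_diff_right fmul_add_left fmul_add_right fmul_scale_left fmul_scale_right
       fmul_fone_left fmul_fone_right fscale_apply algebra_simps)
  have "fmul (q a) ?S = (\<Sum>b\<in>set L. fmul (q a) (q b))" by (rule fmul_sum_right)
  moreover have "(\<Sum>b\<in>set L. fmul (q a) (q b)) \<in> star_ideal R"
    by (rule ideal_sum, rule orth) (use aL in auto)
  ultimately have "fscale 4 (fmul (q a) ?S) \<in> star_ideal R" by (simp only: star_ideal.smult)
  moreover have "fmul ?P (?X - (fone - fscale 2 ?S)) \<in> star_ideal R"
    by (rule star_ideal.lmul[OF IH]) (simp add: q)
  ultimately show ?case unfolding eq by (rule star_ideal.add[rotated])
qed

lemma foldr_nc[simp]: "(\<And>a. F a \<in> ncpoly) \<Longrightarrow> foldr fmul (map F L) fone \<in> ncpoly"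
  by (induction L) auto

lemma subst_foldr:
  assumes H: "\<And>x. h x \<in> ncpoly" and F: "\<And>a. F a \<in> ncpoly"
  shows "subst h (foldr fmul (map F L) fone) = foldr fmul (map (\<lambda>a. subst h (F a)) L) fone"
  by (induction L) (auto simp: subst_fone[OF H] subst_fmul[OF H] F)



lemmas alg = fmul_diff_left fmul_diff_right fmul_add_left fmul_add_right fmul_scale_left fmul_scale_right
  fmul_fone_left fmul_fone_right fscale_apply fstar_diff fstar_add fstar_scale fstar_fone

theorem mainTheorem10:
  fixes V :: "'a::{finite,linorder} \<Rightarrow> 'a \<Rightarrow> 'i::finite \<Rightarrow> 'i \<Rightarrow> bool"
  assumes synchronous: "\<And>a b i. a \<noteq> b \<Longrightarrow> \<not> V a b i i"
  shows "induces_star_iso (star_ideal (sync_rels V)) (star_ideal (bcs_rels V))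
           (\<lambda>x. fscale (1/2) (fone - gen x))
           (\<lambda>x. fone - fscale 2 (gen x))"
proof -
  let ?h = "\<lambda>x::'i \<times> 'a. fscale (1/2) (fone - gen x)"
  let ?k = "\<lambda>x::'i \<times> 'a. fone - fscale 2 (gen x)"
  let ?J1 = "star_ideal (sync_rels V)"
  let ?J2 = "star_ideal (bcs_rels V)"
  let ?L = "sorted_list_of_set (UNIV :: 'a set)"
  have H: "\<And>x. ?h x \<in> ncpoly" by simp
  have K: "\<And>x. ?k x \<in> ncpoly" by simp
  have R1: "sync_rels V \<subseteq> ncpoly" unfolding sync_rels_def by auto
  have R2: "bcs_rels V \<subseteq> ncpoly" unfolding bcs_rels_def by auto
  have dL: "distinct ?L" by simp
  have sL: "set ?L = UNIV" by simp
  have kh: "(\<lambda>x. subst ?k (?h x)) = gen"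
    by (intro ext) (simp add: subst_scale[OF K] subst_diff[OF K] subst_fone[OF K] subst_gen[OF K] alg)
  have hk: "(\<lambda>x. subst ?h (?k x)) = gen"
    by (intro ext) (simp add: subst_scale[OF H] subst_diff[OF H] subst_fone[OF H] subst_gen[OF H] alg algebra_simps)

  have QQ: "fmul (?h (i,a)) (?h (j,b)) \<in> ?J2" if nv: "\<not> V a b i j" for i j a b
  proof -
    have rel: "fscale (1/2) (fone + gen (i,a) + gen (j,b) - fmul (gen (i,a)) (gen (j,b))) - fone \<in> ?J2"
      by (rule star_ideal.rel) (unfold bcs_rels_def, use nv in blast)
    have eq: "fmul (?h (i,a)) (?h (j,b)) = fscale (-1/2) (fscale (1/2) (fone + gen (i,a) + gen (j,b) - fmul (gen (i,a)) (gen (j,b))) - fone)"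
      by (intro ext) (simp add: alg algebra_simps)
    show ?thesis unfolding eq by (rule star_ideal.smult[OF rel])
  qed
  have S1: "subst ?h r \<in> ?J2" if r: "r \<in> sync_rels V" for r
  proof -
    have "(\<exists>i a. r = fmul (gen (i,a)) (gen (i,a)) - gen (i,a)) \<or> (\<exists>i a. r = gen (i,a) - fstar (gen (i,a)))
       \<or> (\<exists>i. r = (\<Sum>a\<in>UNIV. gen (i,a)) - fone) \<or> (\<exists>i j a b. r = fmul (gen (i,a)) (gen (j,b)) \<and> \<not> V a b i j)"
      using r unfolding sync_rels_def by blast
    moreover have c1: "subst ?h (fmul (gen (i,a)) (gen (i,a)) - gen (i,a)) \<in> ?J2" for i a
    proof -
      have rel: "fmul (gen (i,a)) (gen (i,a)) - fone \<in> ?J2"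
        by (rule star_ideal.rel) (unfold bcs_rels_def, blast)
      have eq: "subst ?h (fmul (gen (i,a)) (gen (i,a)) - gen (i,a)) = fscale (1/4) (fmul (gen (i,a)) (gen (i,a)) - fone)"
        by (intro ext) (simp add: subst_diff[OF H] subst_fmul[OF H] subst_gen[OF H] alg algebra_simps)
      show ?thesis unfolding eq by (rule star_ideal.smult[OF rel])
    qed
    moreover have c2: "subst ?h (gen (i,a) - fstar (gen (i,a))) \<in> ?J2" for i a
    proof -
      have rel: "gen (i,a) - fstar (gen (i,a)) \<in> ?J2"
        by (rule star_ideal.rel) (unfold bcs_rels_def, blast)
      have eq: "subst ?h (gen (i,a) - fstar (gen (i,a))) = fscale (-1/2) (gen (i,a) - fstar (gen (i,a)))"
        by (intro ext) (simp add: subst_diff[OF H] subst_fstar[OF H] subst_gen[OF H] alg algebra_simps)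
      show ?thesis unfolding eq by (rule star_ideal.smult[OF rel])
    qed
    moreover have c3: "subst ?h ((\<Sum>a\<in>UNIV. gen (i,a)) - fone) \<in> ?J2" for i
    proof -
      let ?X = "foldr fmul (map (\<lambda>a. gen (i,a)) ?L) fone"
      have rel: "?X + fone \<in> ?J2"
        by (rule star_ideal.rel) (unfold bcs_rels_def, blast)
      have P: "foldr fmul (map (\<lambda>a. fone - fscale 2 (?h (i,a))) ?L) fone
            - (fone - fscale 2 (\<Sum>a\<in>set ?L. ?h (i,a))) \<in> ?J2"
        by (rule prod_lemma[OF R2 _ _ dL]) (simp, rule QQ, rule synchronous)
      have m: "(\<lambda>a. fone - fscale 2 (?h (i,a))) = (\<lambda>a. gen (i,a))"
        by (intro ext) (simp add: alg algebra_simps)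
      have P': "?X - (fone - fscale 2 (\<Sum>a\<in>UNIV. ?h (i,a))) \<in> ?J2"
        using P unfolding m sL .
      have eq: "subst ?h ((\<Sum>a\<in>UNIV. gen (i,a)) - fone) =
         fscale (-1/2) ((?X + fone) - (?X - (fone - fscale 2 (\<Sum>a\<in>UNIV. ?h (i,a)))))"
        by (intro ext) (simp add: subst_diff[OF H] subst_sum[OF H] subst_fone[OF H] subst_gen[OF H] alg algebra_simps)
      show ?thesis unfolding eq by (rule star_ideal.smult, rule ideal_diff[OF rel P'])
    qed
    moreover have c4: "subst ?h (fmul (gen (i,a)) (gen (j,b))) \<in> ?J2" if "\<not> V a b i j" for i j a b
    proof -
      have eq: "subst ?h (fmul (gen (i,a)) (gen (j,b))) = fmul (?h (i,a)) (?h (j,b))"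
        by (simp add: subst_fmul[OF H] subst_gen[OF H])
      show ?thesis unfolding eq by (rule QQ[OF that])
    qed
    ultimately show ?thesis by (elim disjE exE conjE) (simp_all only: c1 c2 c3 c4)
  qed

  have S2: "subst ?k r \<in> ?J1" if r: "r \<in> bcs_rels V" for r
  proof -
    have "(\<exists>i a. r = gen (i,a) - fstar (gen (i,a))) \<or> (\<exists>i a. r = fmul (gen (i,a)) (gen (i,a)) - fone)
       \<or> (\<exists>i j a b. r = fscale (1/2) (fone + gen (i,a) + gen (j,b) - fmul (gen (i,a)) (gen (j,b))) - fone \<and> \<not> V a b i j)
       \<or> (\<exists>i. r = foldr fmul (map (\<lambda>a. gen (i,a)) ?L) fone + fone)
       \<or> (\<exists>i a a'. r = fmul (gen (i,a)) (gen (i,a')) - fmul (gen (i,a')) (gen (i,a)))"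
      using r unfolding bcs_rels_def by blast
    moreover have d1: "subst ?k (gen (i,a) - fstar (gen (i,a))) \<in> ?J1" for i a
    proof -
      have rel: "gen (i,a) - fstar (gen (i,a)) \<in> ?J1"
        by (rule star_ideal.rel) (unfold sync_rels_def, blast)
      have eq: "subst ?k (gen (i,a) - fstar (gen (i,a))) = fscale (-2) (gen (i,a) - fstar (gen (i,a)))"
        by (intro ext) (simp add: subst_diff[OF K] subst_fstar[OF K] subst_gen[OF K] alg algebra_simps)
      show ?thesis unfolding eq by (rule star_ideal.smult[OF rel])
    qed
    moreover have d2: "subst ?k (fmul (gen (i,a)) (gen (i,a)) - fone) \<in> ?J1" for i a
    proof -
      have rel: "fmul (gen (i,a)) (gen (i,a)) - gen (i,a) \<in> ?J1"
        by (rule star_ideal.rel) (unfold sync_rels_def, blast)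
      have eq: "subst ?k (fmul (gen (i,a)) (gen (i,a)) - fone) = fscale 4 (fmul (gen (i,a)) (gen (i,a)) - gen (i,a))"
        by (intro ext) (simp add: subst_diff[OF K] subst_fmul[OF K] subst_gen[OF K] subst_fone[OF K] alg algebra_simps)
      show ?thesis unfolding eq by (rule star_ideal.smult[OF rel])
    qed
    moreover have d3: "subst ?k (fscale (1/2) (fone + gen (i,a) + gen (j,b) - fmul (gen (i,a)) (gen (j,b))) - fone) \<in> ?J1"
      if nv: "\<not> V a b i j" for i j a b
    proof -
      have rel: "fmul (gen (i,a)) (gen (j,b)) \<in> ?J1"
        by (rule star_ideal.rel) (unfold sync_rels_def, use nv in blast)
      have eq: "subst ?k (fscale (1/2) (fone + gen (i,a) + gen (j,b) - fmul (gen (i,a)) (gen (j,b))) - fone)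
          = fscale (-2) (fmul (gen (i,a)) (gen (j,b)))"
        by (intro ext) (simp add: subst_diff[OF K] subst_add[OF K] subst_scale[OF K] subst_fmul[OF K] subst_gen[OF K] subst_fone[OF K] alg algebra_simps)
      show ?thesis unfolding eq by (rule star_ideal.smult[OF rel])
    qed
    moreover have d4: "subst ?k (foldr fmul (map (\<lambda>a. gen (i,a)) ?L) fone + fone) \<in> ?J1" for i
    proof -
      let ?X = "foldr fmul (map (\<lambda>a. ?k (i,a)) ?L) fone"
      have rel: "(\<Sum>a\<in>UNIV. gen (i,a)) - fone \<in> ?J1"
        by (rule star_ideal.rel) (unfold sync_rels_def, blast)
      have P: "?X - (fone - fscale 2 (\<Sum>a\<in>set ?L. gen (i,a))) \<in> ?J1"
      proof (rule prod_lemma[OF R1 _ _ dL])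
        fix a b :: 'a assume "a \<noteq> b"
        then have nv: "\<not> V a b i i" by (rule synchronous)
        then show "fmul (gen (i,a)) (gen (i,b)) \<in> ?J1"
          by (intro star_ideal.rel) (unfold sync_rels_def, use nv in blast)
      qed simp
      have P': "?X - (fone - fscale 2 (\<Sum>a\<in>UNIV. gen (i,a))) \<in> ?J1"
        using P unfolding sL .
      have eq: "subst ?k (foldr fmul (map (\<lambda>a. gen (i,a)) ?L) fone + fone) =
         (?X - (fone - fscale 2 (\<Sum>a\<in>UNIV. gen (i,a)))) - fscale 2 ((\<Sum>a\<in>UNIV. gen (i,a)) - fone)"
        by (intro ext) (simp add: subst_add[OF K] subst_foldr[OF K] subst_gen[OF K] subst_fone[OF K] alg algebra_simps)
      show ?thesis unfolding eq by (rule ideal_diff[OF P' star_ideal.smult[OF rel]])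
    qed
    moreover have d5: "subst ?k (fmul (gen (i,a)) (gen (i,a')) - fmul (gen (i,a')) (gen (i,a))) \<in> ?J1" for i a a'
    proof -
      have rel: "fmul (gen (i,a)) (gen (i,a')) - fmul (gen (i,a')) (gen (i,a)) \<in> ?J1"
      proof (cases "a = a'")
        case True
        have "fmul (gen (i,a)) (gen (i,a')) - fmul (gen (i,a')) (gen (i,a)) = 0" using True by simp
        then show ?thesis by (simp only: star_ideal.zero)
      next
        case False
        have nv1: "\<not> V a a' i i" using synchronous False by metis
        have r1: "fmul (gen (i,a)) (gen (i,a')) \<in> ?J1"
          by (intro star_ideal.rel) (unfold sync_rels_def, use nv1 in blast)
        have nv: "\<not> V a' a i i" using synchronous False by metis
        have r2: "fmul (gen (i,a')) (gen (i,a)) \<in> ?J1"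
          by (intro star_ideal.rel) (unfold sync_rels_def, use nv in blast)
        show ?thesis by (rule ideal_diff[OF r1 r2])
      qed
      have eq: "subst ?k (fmul (gen (i,a)) (gen (i,a')) - fmul (gen (i,a')) (gen (i,a)))
          = fscale 4 (fmul (gen (i,a)) (gen (i,a')) - fmul (gen (i,a')) (gen (i,a)))"
        by (intro ext) (simp add: subst_diff[OF K] subst_fmul[OF K] subst_gen[OF K] alg algebra_simps)
      show ?thesis unfolding eq by (rule star_ideal.smult[OF rel])
    qed
    ultimately show ?thesis by (elim disjE exE conjE) (simp_all only: d1 d2 d3 d4 d5)
  qed

  show ?thesis unfolding induces_star_iso_def
  proof (intro conjI ballI)
    fix f assume "f \<in> ?J1"
    then show "subst ?h f \<in> ?J2" by (rule subst_ideal[OF H R1 S1, rotated])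
  next
    fix g assume "g \<in> ?J2"
    then show "subst ?k g \<in> ?J1" by (rule subst_ideal[OF K R2 S2, rotated])
  next
    fix f :: "('i \<times> 'a) fsa" assume f: "f \<in> ncpoly"
    have "subst ?k (subst ?h f) - f = 0"
      by (simp add: subst_subst[OF H K f] kh subst_gen_id[OF f])
    then show "subst ?k (subst ?h f) - f \<in> ?J1" by (simp only: star_ideal.zero)
  next
    fix g :: "('i \<times> 'a) fsa" assume g: "g \<in> ncpoly"
    have "subst ?h (subst ?k g) - g = 0"
      by (simp add: subst_subst[OF K H g] hk subst_gen_id[OF g])
    then show "subst ?h (subst ?k g) - g \<in> ?J2" by (simp only: star_ideal.zero)
  qed
qed

end
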